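(* Let $\Omega$ be a finite state space with at least three states and $X:\Omega\to\mathbb R$ a non-constant security. Then $X$ is separable under every information structure $\Pi\in\mathcal P$ on $\Omega$ (with any number of traders) if and only if either (a) $X$ is an Arrow–Debreu security: there is a state $\omega$ and values $a\neq b$ with $X(\omega)=a$ and $X(\omega')=b$ for all $\omega'\neq\omega$; or (b) there are values $a<b<d$ and two distinct states $\omega_a,\omega_d$ with $X(\omega_a)=a$, $X(\omega_d)=d$ and $X(\omega)=b$ for all $\omega\neq\omega_a,\omega_d$.
   Context: An information structure $\Pi=(\Pi_1,\dots,\Pi_n)$ assigns to each trader $i\in\{1,\dots,n\}$ a partition $\Pi_i$ of $\Omega$; $\Pi_i(\omega)$ is the cell containing $\omega$. $\mathcal P$ is the collection of information structures on state spaces with at least three states such that $\bigcap_i\Pi_i(\omega)=\{\omega\}$ for all $\omega$. $X$ is non-separable under $\Pi$ if there exist a probability distribution $\mu$ on $\Omega$ and $v\in\mathbb R$ such that (i) $X(\omega)\neq v$ for some $\omega\in\operatorname{Supp}(\mu)$, and (ii) $E_\mu[X\mid\Pi_i(\omega)]=v$ for all $i$ and all $\omega\in\operatorname{Supp}(\mu)$; otherwise $X$ is separable under $\Pi$. *)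

theory Defs
  imports Complex_Main "HOL-Library.Disjoint_Sets"
begin

definition cell :: "'a set set \<Rightarrow> 'a \<Rightarrow> 'a set" where
  "cell P w = (THE B. B \<in> P \<and> w \<in> B)"

definition info_structure :: "nat \<Rightarrow> (nat \<Rightarrow> 'a set set) \<Rightarrow> bool" where
  "info_structure n S \<longleftrightarrow>
     (\<forall>i<n. partition_on (UNIV :: 'a set) (S i)) \<and>
     (\<forall>w. (\<Inter>i\<in>{..<n}. cell (S i) w) = {w})"

definition prob_dist :: "('a::finite \<Rightarrow> real) \<Rightarrow> bool" where
  "prob_dist mu \<longleftrightarrow> (\<forall>w. 0 \<le> mu w) \<and> sum mu UNIV = 1"

definition supp :: "('a \<Rightarrow> real) \<Rightarrow> 'a set" where
  "supp mu = {w. mu w > 0}"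

definition cond_exp :: "('a \<Rightarrow> real) \<Rightarrow> ('a \<Rightarrow> real) \<Rightarrow> 'a set \<Rightarrow> real" where
  "cond_exp mu X B = (\<Sum>w\<in>B. mu w * X w) / (\<Sum>w\<in>B. mu w)"

definition non_separable :: "nat \<Rightarrow> (nat \<Rightarrow> 'a::finite set set) \<Rightarrow> ('a \<Rightarrow> real) \<Rightarrow> bool" where
  "non_separable n S X \<longleftrightarrow>
     (\<exists>mu v. prob_dist mu \<and>
        (\<exists>w\<in>supp mu. X w \<noteq> v) \<and>
        (\<forall>i<n. \<forall>w\<in>supp mu. cond_exp mu X (cell (S i) w) = v))"

definition separable :: "nat \<Rightarrow> (nat \<Rightarrow> 'a::finite set set) \<Rightarrow> ('a \<Rightarrow> real) \<Rightarrow> bool" where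
  "separable n S X \<longleftrightarrow> \<not> non_separable n S X"

end

theory Submission imports Defs begin

lemma cell_props:
  assumes "partition_on UNIV P"
  shows "cell P w \<in> P \<and> w \<in> cell P w"
proof -
  have ex: "\<exists>B. B \<in> P \<and> w \<in> B" using partition_onD1[OF assms] by blast
  have uq: "\<And>B C. B \<in> P \<Longrightarrow> w \<in> B \<Longrightarrow> C \<in> P \<Longrightarrow> w \<in> C \<Longrightarrow> B = C"
    using partition_onD2[OF assms] by (auto simp: disjoint_def)
  have "\<exists>!B. B \<in> P \<and> w \<in> B" using ex uq by blast
  then show ?thesis unfolding cell_def by (rule theI')
qed

lemma cell_range:
  fixes f :: "'a \<Rightarrow> 'a set"
  assumes "\<And>w. w \<in> f w" and "\<And>u w. u \<in> f w \<Longrightarrow> f u = f w"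
  shows "partition_on UNIV (range f)" and "cell (range f) w = f w"
proof -
  show P: "partition_on UNIV (range f)"
  proof (rule partition_onI)
    show "\<Union> (range f) = UNIV" using assms(1) by blast
    show "{} \<notin> range f" using assms(1) by blast
    fix p q assume "p \<in> range f" "q \<in> range f" "p \<noteq> q"
    then obtain a b where ab: "p = f a" "q = f b" by blast
    show "disjnt p q" unfolding disjnt_def
    proof (rule ccontr)
      assume "p \<inter> q \<noteq> {}"
      then obtain u where "u \<in> f a" "u \<in> f b" using ab by blast
      then have "f a = f b" using assms(2) by metis
      then show False using ab \<open>p \<noteq> q\<close> by simp
    qed
  qed
  have "cell (range f) w \<in> range f \<and> w \<in> cell (range f) w" by (rule cell_props[OF P])
  then show "cell (range f) w = f w" using assms(2) by auto
qed

lemma opposite: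
  fixes X mu :: "'a \<Rightarrow> real"
  assumes "finite B" "\<forall>w. 0 \<le> mu w" "(\<Sum>w\<in>B. mu w * (X w - v)) = 0" "u \<in> B" "mu u > 0" "X u > v"
  shows "\<exists>u'\<in>B. mu u' > 0 \<and> X u' < v"
proof (rule ccontr)
  assume "\<not> ?thesis"
  then have nn: "\<And>x. x \<in> B \<Longrightarrow> 0 \<le> mu x * (X x - v)"
    using assms(2) by (metis diff_ge_0_iff_ge less_eq_real_def not_less zero_le_mult_iff)
  have "0 < (\<Sum>w\<in>B. mu w * (X w - v))"
    using assms nn by (intro sum_pos2[where i=u]) auto
  then show False using assms(3) by simp
qed

lemma cond_exp_zero:
  fixes X mu :: "'a \<Rightarrow> real"
  assumes "finite B" "(\<Sum>w\<in>B. mu w) > 0" "cond_exp mu X B = v"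
  shows "(\<Sum>w\<in>B. mu w * (X w - v)) = 0"
proof -
  have "(\<Sum>w\<in>B. mu w * X w) = v * (\<Sum>w\<in>B. mu w)"
    using assms(2,3) unfolding cond_exp_def by (simp add: field_simps)
  then show ?thesis by (simp add: algebra_simps sum_subtractf sum_distrib_left)
qed

lemma cell_sum_pos:
  fixes mu :: "'a::finite \<Rightarrow> real"
  assumes "partition_on UNIV P" "\<forall>w. 0 \<le> mu w" "w \<in> supp mu"
  shows "(\<Sum>x\<in>cell P w. mu x) > 0"
  using assms cell_props[OF assms(1), of w] unfolding supp_def
  by (intro sum_pos2[where i=w]) auto

lemma core:
  fixes X mu :: "'a::finite \<Rightarrow> real"
  assumes info: "info_structure n S" and n: "n > 0" and nn: "\<forall>w. 0 \<le> mu w"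
    and ce: "\<forall>i<n. \<forall>w\<in>supp mu. cond_exp mu X (cell (S i) w) = v"
    and w: "w \<in> supp mu" "X w \<noteq> v" and L: "{w. X w < v} \<subseteq> {w0}"
  shows False
proof -
  have part: "\<And>i. i < n \<Longrightarrow> partition_on UNIV (S i)" using info unfolding info_structure_def by blast
  have Z: "\<And>i u. i < n \<Longrightarrow> u \<in> supp mu \<Longrightarrow> (\<Sum>x\<in>cell (S i) u. mu x * (X x - v)) = 0"
  proof -
    fix i u assume a: "i < n" "u \<in> supp mu"
    have "cond_exp mu X (cell (S i) u) = v" using ce[rule_format, OF a] .
    then show "(\<Sum>x\<in>cell (S i) u. mu x * (X x - v)) = 0"
      by (rule cond_exp_zero[OF finite cell_sum_pos[OF part[OF a(1)] nn a(2)]])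
  qed
  have mem: "\<And>i u. i < n \<Longrightarrow> u \<in> cell (S i) u" using conjunct2[OF cell_props[OF part]] .
  have pos: "\<And>u. u \<in> supp mu \<Longrightarrow> mu u > 0" unfolding supp_def by simp
  obtain w1 where w1: "w1 \<in> supp mu" "X w1 > v"
  proof (cases "X w > v")
    case True then show ?thesis using that w by blast
  next
    case False
    then have "X w < v" using w by linarith
    then have "- X w > - v" by simp
    have z: "(\<Sum>x\<in>cell (S 0) w. mu x * ((- X x) - (- v))) = 0"
    proof -
      have "(\<Sum>x\<in>cell (S 0) w. mu x * ((- X x) - (- v))) = - (\<Sum>x\<in>cell (S 0) w. mu x * (X x - v))"
        by (simp add: sum_negf[symmetric] algebra_simps)
      then show ?thesis using Z[OF n w(1)] by simp
    qed
    obtain u' where "u' \<in> cell (S 0) w" "mu u' > 0" "- X u' < - v"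
      using opposite[of "cell (S 0) w" mu "\<lambda>x. - X x" "-v" w, OF finite nn z mem[OF n] pos[OF w(1)] \<open>- X w > - v\<close>]
      by blast
    then show ?thesis using that unfolding supp_def by simp
  qed
  have low: "\<And>i. i < n \<Longrightarrow> w0 \<in> cell (S i) w1 \<and> X w0 < v"
  proof -
    fix i assume i: "i < n"
    obtain u' where "u' \<in> cell (S i) w1" "X u' < v"
      using opposite[of "cell (S i) w1" mu X v w1, OF finite nn Z[OF i w1(1)] mem[OF i] pos[OF w1(1)] w1(2)]
      by blast
    moreover then have "u' = w0" using L by blast
    ultimately show "w0 \<in> cell (S i) w1 \<and> X w0 < v" by simp
  qed
  have "w0 \<in> (\<Inter>i\<in>{..<n}. cell (S i) w1)" using low by blast
  moreover have "(\<Inter>i\<in>{..<n}. cell (S i) w1) = {w1}" using info unfolding info_structure_def by blast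
  ultimately have "w0 = w1" by blast
  then show False using low[OF n] w1(2) by simp
qed

lemma pair_ce:
  fixes X mu :: "'a \<Rightarrow> real"
  assumes "p \<noteq> q" "mu p + mu q > 0" "mu p * (X p - v) + mu q * (X q - v) = 0"
  shows "cond_exp mu X {p, q} = v"
proof -
  have "mu p * X p + mu q * X q = v * (mu p + mu q)" using assms(3) by (simp add: algebra_simps)
  then show ?thesis using assms(1,2) unfolding cond_exp_def by (simp add: field_simps)
qed

lemma construct:
  fixes X :: "'a::finite \<Rightarrow> real"
  assumes d14: "p1 \<noteq> p4" and d23: "p2 \<noteq> p3" and x: "X p1 > v" "X p4 > v" "X p2 < v" "X p3 < v"
  shows "\<exists>n S. info_structure n S \<and> non_separable n S X"
proof -
  have d: "p1 \<noteq> p2" "p1 \<noteq> p3" "p4 \<noteq> p2" "p4 \<noteq> p3" using x by auto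
  define f0 :: "'a \<Rightarrow> 'a set" where "f0 w = (if w \<in> {p1,p2} then {p1,p2} else if w \<in> {p3,p4} then {p3,p4} else {w})" for w
  define f1 :: "'a \<Rightarrow> 'a set" where "f1 w = (if w \<in> {p1,p3} then {p1,p3} else if w \<in> {p2,p4} then {p2,p4} else {w})" for w
  have f0a: "\<And>w. w \<in> f0 w" and f0b: "\<And>u w. u \<in> f0 w \<Longrightarrow> f0 u = f0 w"
    unfolding f0_def using d d14 d23 by auto
  have f1a: "\<And>w. w \<in> f1 w" and f1b: "\<And>u w. u \<in> f1 w \<Longrightarrow> f1 u = f1 w"
    unfolding f1_def using d d14 d23 by auto
  define S :: "nat \<Rightarrow> 'a set set" where "S i = (if i = 0 then range f0 else range f1)" for i
  have c0: "cell (S 0) w = f0 w" for w unfolding S_def using cell_range(2)[OF f0a f0b] by simp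
  have c1: "cell (S 1) w = f1 w" for w unfolding S_def using cell_range(2)[OF f1a f1b] by simp
  have lt2: "{..<2::nat} = {0, 1}" by auto
  have info: "info_structure 2 S"
    unfolding info_structure_def
  proof (intro conjI allI impI)
    fix i :: nat assume "i < 2"
    then show "partition_on UNIV (S i)" unfolding S_def using cell_range(1)[OF f0a f0b] cell_range(1)[OF f1a f1b] by simp
  next
    fix w
    show "(\<Inter>i\<in>{..<2}. cell (S i) w) = {w}"
      unfolding lt2 using c0 c1 d d14 d23 by (auto simp: f0_def f1_def)
  qed
  define P where "P = {p1, p2, p3, p4}"
  define k where "k w = 1 / \<bar>X w - v\<bar>" for w
  define K where "K = sum k P"
  define mu where "mu w = (if w \<in> P then k w / K else 0)" for w
  have kpos: "w \<in> P \<Longrightarrow> k w > 0" for w unfolding k_def P_def using x by auto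
  have Kpos: "K > 0" unfolding K_def using kpos P_def by (intro sum_pos) auto
  have mupos: "w \<in> P \<Longrightarrow> mu w > 0" for w unfolding mu_def using kpos Kpos by simp
  have suppP: "supp mu = P" unfolding supp_def using mupos mu_def by auto
  have "sum mu UNIV = sum (\<lambda>w. k w / K) (UNIV \<inter> P)"
    unfolding mu_def by (rule sum.inter_restrict[symmetric]) simp
  also have "\<dots> = K / K" unfolding K_def by (simp only: Int_UNIV_left sum_divide_distrib)
  finally have pd: "prob_dist mu" unfolding prob_dist_def using Kpos mupos by (auto simp: mu_def less_imp_le)
  have hi: "w \<in> P \<Longrightarrow> X w > v \<Longrightarrow> mu w * (X w - v) = 1 / K" for w
    unfolding mu_def k_def using Kpos by auto
  have lo: "w \<in> P \<Longrightarrow> X w < v \<Longrightarrow> mu w * (X w - v) = - 1 / K" for w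
    unfolding mu_def k_def using Kpos by (auto simp: field_simps)
  have pc: "cond_exp mu X {p, q} = v" if "p \<in> P" "q \<in> P" "X p > v" "X q < v" for p q
  proof (rule pair_ce)
    show "p \<noteq> q" using that by auto
    show "mu p + mu q > 0" using mupos that by (simp add: add_pos_pos)
    show "mu p * (X p - v) + mu q * (X q - v) = 0" using hi lo that by simp
  qed
  have pc': "cond_exp mu X {q, p} = v" if "p \<in> P" "q \<in> P" "X p > v" "X q < v" for p q
    using pc[OF that] by (simp add: insert_commute)
  have inP: "p1 \<in> P" "p2 \<in> P" "p3 \<in> P" "p4 \<in> P" unfolding P_def by auto
  have ce: "\<forall>i<2. \<forall>w\<in>supp mu. cond_exp mu X (cell (S i) w) = v"
  proof (intro allI impI ballI)
    fix i :: nat and w assume i: "i < 2" and w: "w \<in> supp mu"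
    have w': "w = p1 \<or> w = p2 \<or> w = p3 \<or> w = p4" using w suppP P_def by auto
    have "i = 0 \<or> i = 1" using i by auto
    then show "cond_exp mu X (cell (S i) w) = v"
    proof
      assume "i = 0"
      then show ?thesis using w' c0 pc[OF inP(1) inP(2) x(1) x(3)] pc'[OF inP(4) inP(3) x(2) x(4)]
        d d14 d23 by (auto simp: f0_def)
    next
      assume "i = 1"
      then show ?thesis using w' c1 pc[OF inP(1) inP(3) x(1) x(4)] pc'[OF inP(4) inP(2) x(2) x(3)]
        d d14 d23 by (auto simp: f1_def)
    qed
  qed
  have "non_separable 2 S X"
    unfolding non_separable_def
    using pd ce suppP inP x by (intro exI[of _ mu] exI[of _ v]) auto
  then show ?thesis using info by blast
qed

lemma comb:
  fixes X :: "'a::finite \<Rightarrow> real"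
  assumes card: "card (UNIV :: 'a set) \<ge> 3" and nc: "\<exists>w w'. X w \<noteq> X w'"
    and no: "\<not> (\<exists>v p1 p2 p3 p4. p1 \<noteq> p4 \<and> p2 \<noteq> p3 \<and> X p1 > v \<and> X p4 > v \<and> X p2 < v \<and> X p3 < v)"
  shows "(\<exists>w a b. a \<noteq> b \<and> X w = a \<and> (\<forall>w'. w' \<noteq> w \<longrightarrow> X w' = b))
          \<or> (\<exists>a b d wa wd. a < b \<and> b < d \<and> wa \<noteq> wd \<and> X wa = a \<and> X wd = d \<and>
               (\<forall>w. w \<noteq> wa \<and> w \<noteq> wd \<longrightarrow> X w = b))"
proof -
  have "Min (range X) \<in> range X" by (rule Min_in) auto
  then obtain wa where wa: "X wa = Min (range X)" by (rule rangeE) (metis)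
  have "Max (range X) \<in> range X" by (rule Max_in) auto
  then obtain wd where wd: "X wd = Max (range X)" by (rule rangeE) (metis)
  have mn: "\<And>w. X wa \<le> X w" using wa by simp
  have mx: "\<And>w. X w \<le> X wd" using wd by simp
  obtain u u' where uu: "X u \<noteq> X u'" using nc by blast
  have lt: "X wa < X wd" using uu mn[of u] mn[of u'] mx[of u] mx[of u'] by linarith
  have "card (UNIV - {wa, wd}) > 0"
  proof -
    have "card (UNIV - {wa, wd}) \<ge> card (UNIV :: 'a set) - card {wa, wd}" by (rule diff_card_le_card_Diff) simp
    moreover have "card {wa, wd} \<le> 2" by (rule card_insert_le_m1) auto
    ultimately show ?thesis using card by linarith
  qed
  then have "UNIV - {wa, wd} \<noteq> {}" by (simp only: card_gt_0_iff) simp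
  then obtain w3 where "w3 \<in> UNIV - {wa, wd}" by blast
  then have w3: "w3 \<noteq> wa" "w3 \<noteq> wd" by simp_all
  have two: False if "X u < X u'" "u \<noteq> wa" "u' \<noteq> wd" for u u'
  proof -
    define v where "v = (X u + X u') / 2"
    have "X u' > v" "X wd > v" "X wa < v" "X u < v"
      using that(1) mn[of u] mx[of u'] unfolding v_def by auto
    then show False using no that(2,3) by blast
  qed
  have same: "X w = X w3" if "w \<noteq> wa" "w \<noteq> wd" for w
  proof -
    have "\<not> X w < X w3" using two[of w w3] that w3 by blast
    moreover have "\<not> X w3 < X w" using two[of w3 w] that w3 by blast
    ultimately show ?thesis by linarith
  qed
  define b where "b = X w3"
  have sb: "\<And>w. w \<noteq> wa \<Longrightarrow> w \<noteq> wd \<Longrightarrow> X w = b" using same b_def by simp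
  have "X wa \<le> b" "b \<le> X wd" using mn mx b_def by auto
  then consider "X wa < b \<and> b < X wd" | "X wa = b" | "b = X wd" by linarith
  then show ?thesis
  proof cases
    case 1
    have A: "\<forall>w. w \<noteq> wa \<and> w \<noteq> wd \<longrightarrow> X w = b" using sb by blast
    have B: "wa \<noteq> wd" using lt by auto
    show ?thesis
      by (rule disjI2, rule exI[of _ "X wa"], rule exI[of _ b], rule exI[of _ "X wd"], rule exI[of _ wa], rule exI[of _ wd])
        (use A B 1 in simp)
  next
    case 2
    have "\<forall>w'. w' \<noteq> wd \<longrightarrow> X w' = b"
    proof (intro allI impI)
      fix w' assume "w' \<noteq> wd"
      show "X w' = b"
      proof (cases "w' = wa")
        case True then show ?thesis using 2 by simp
      next
        case False then show ?thesis using sb \<open>w' \<noteq> wd\<close> by blast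
      qed
    qed
    moreover have "X wd \<noteq> b" using 2 lt by simp
    ultimately have C: "(\<forall>w'. w' \<noteq> wd \<longrightarrow> X w' = b) \<and> X wd \<noteq> b" by simp
    show ?thesis
      by (rule disjI1, rule exI[of _ wd], rule exI[of _ "X wd"], rule exI[of _ b]) (use C in simp)
  next
    case 3
    have "\<forall>w'. w' \<noteq> wa \<longrightarrow> X w' = b"
    proof (intro allI impI)
      fix w' assume "w' \<noteq> wa"
      show "X w' = b"
      proof (cases "w' = wd")
        case True then show ?thesis using 3 by simp
      next
        case False then show ?thesis using sb \<open>w' \<noteq> wa\<close> by blast
      qed
    qed
    moreover have "X wa \<noteq> b" using 3 lt by simp
    ultimately have C: "(\<forall>w'. w' \<noteq> wa \<longrightarrow> X w' = b) \<and> X wa \<noteq> b" by simp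
    show ?thesis
      by (rule disjI1, rule exI[of _ wa], rule exI[of _ "X wa"], rule exI[of _ b]) (use C in simp)
  qed
qed

lemma cond_exp_neg: "cond_exp mu (\<lambda>x. - X x) B = - cond_exp mu X B"
  unfolding cond_exp_def by (simp add: sum_negf)

lemma rhs_cond:
  fixes X :: "'a \<Rightarrow> real"
  assumes "(\<exists>w a b. a \<noteq> b \<and> X w = a \<and> (\<forall>w'. w' \<noteq> w \<longrightarrow> X w' = b))
          \<or> (\<exists>a b d wa wd. a < b \<and> b < d \<and> wa \<noteq> wd \<and> X wa = a \<and> X wd = d \<and>
               (\<forall>w. w \<noteq> wa \<and> w \<noteq> wd \<longrightarrow> X w = b))"
  shows "\<exists>w0. {w. X w < v} \<subseteq> {w0} \<or> {w. X w > v} \<subseteq> {w0}"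
  using assms
proof
  assume "\<exists>w a b. a \<noteq> b \<and> X w = a \<and> (\<forall>w'. w' \<noteq> w \<longrightarrow> X w' = b)"
  then obtain w a b where h: "\<forall>w'. w' \<noteq> w \<longrightarrow> X w' = b" by blast
  show ?thesis
  proof (cases "b \<le> v")
    case True
    have "{w. X w > v} \<subseteq> {w}"
    proof
      fix u assume "u \<in> {w. X w > v}"
      then have "X u > v" by simp
      then show "u \<in> {w}" using h True by (metis not_less singletonI)
    qed
    then show ?thesis by blast
  next
    case False
    have "{w. X w < v} \<subseteq> {w}"
    proof
      fix u assume "u \<in> {w. X w < v}"
      then have "X u < v" by simp
      then show "u \<in> {w}" using h False by (metis not_less less_imp_le singletonI)
    qed
    then show ?thesis by blast
  qed
next
  assume "\<exists>a b d wa wd. a < b \<and> b < d \<and> wa \<noteq> wd \<and> X wa = a \<and> X wd = d \<and>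
               (\<forall>w. w \<noteq> wa \<and> w \<noteq> wd \<longrightarrow> X w = b)"
  then obtain a b d wa wd where h: "a < b" "b < d" "X wa = a" "X wd = d"
     "\<forall>w. w \<noteq> wa \<and> w \<noteq> wd \<longrightarrow> X w = b" by blast
  show ?thesis
  proof (cases "v \<le> b")
    case True
    have "{w. X w < v} \<subseteq> {wa}"
    proof
      fix w assume "w \<in> {w. X w < v}"
      then have "X w < v" by simp
      show "w \<in> {wa}"
      proof (rule ccontr)
        assume "w \<notin> {wa}"
        then have nwa: "w \<noteq> wa" by simp
        show False
        proof (cases "w = wd")
          case True then have "X w = d" using h(4) by simp
          then show False using \<open>X w < v\<close> h(1,2) \<open>v \<le> b\<close> by linarith
        next
          case False then have "X w = b" using h(5) nwa by blast
          then show False using \<open>X w < v\<close> \<open>v \<le> b\<close> by linarith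
        qed
      qed
    qed
    then show ?thesis by blast
  next
    case False
    have "{w. X w > v} \<subseteq> {wd}"
    proof
      fix w assume "w \<in> {w. X w > v}"
      then have "X w > v" by simp
      show "w \<in> {wd}"
      proof (rule ccontr)
        assume "w \<notin> {wd}"
        then have nwd: "w \<noteq> wd" by simp
        show False
        proof (cases "w = wa")
          case True then have "X w = a" using h(3) by simp
          then show False using \<open>X w > v\<close> h(1,2) \<open>\<not> v \<le> b\<close> by linarith
        next
          case False then have "X w = b" using h(5) nwd by blast
          then show False using \<open>X w > v\<close> \<open>\<not> v \<le> b\<close> by linarith
        qed
      qed
    qed
    then show ?thesis by blast
  qed
qed

theorem proposition3:
  fixes X :: "'a::finite \<Rightarrow> real"
  assumes "card (UNIV :: 'a set) \<ge> 3"
    and "\<exists>w w'. X w \<noteq> X w'"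
  shows "(\<forall>n (S :: nat \<Rightarrow> 'a set set). info_structure n S \<longrightarrow> separable n S X)
     \<longleftrightarrow> ((\<exists>w a b. a \<noteq> b \<and> X w = a \<and> (\<forall>w'. w' \<noteq> w \<longrightarrow> X w' = b))
          \<or> (\<exists>a b d wa wd. a < b \<and> b < d \<and> wa \<noteq> wd \<and> X wa = a \<and> X wd = d \<and>
               (\<forall>w. w \<noteq> wa \<and> w \<noteq> wd \<longrightarrow> X w = b)))" (is "?L \<longleftrightarrow> ?R")
proof
  assume L: ?L
  show ?R
  proof (rule ccontr)
    assume "\<not> ?R"
    then have "\<exists>v p1 p2 p3 p4. p1 \<noteq> p4 \<and> p2 \<noteq> p3 \<and> X p1 > v \<and> X p4 > v \<and> X p2 < v \<and> X p3 < v"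
      using comb[OF assms] by blast
    then obtain v p1 p2 p3 p4 where "p1 \<noteq> p4" "p2 \<noteq> p3" "X p1 > v" "X p4 > v" "X p2 < v" "X p3 < v"
      by blast
    then have "\<exists>n S. info_structure n S \<and> non_separable n S X" by (rule construct)
    then obtain n S where "info_structure n S" "non_separable n S X" by blast
    then show False using L unfolding separable_def by blast
  qed
next
  assume R: ?R
  show ?L
  proof (intro allI impI)
    fix n and S :: "nat \<Rightarrow> 'a set set"
    assume info: "info_structure n S"
    have n: "n > 0"
    proof (rule ccontr)
      assume "\<not> n > 0"
      then have "n = 0" by simp
      then have "(UNIV :: 'a set) = {undefined}" using info unfolding info_structure_def by simp
      then have "card (UNIV :: 'a set) = card {undefined :: 'a}" by (rule arg_cong)
      then have "card (UNIV :: 'a set) = 1" by (simp only: card_1_singleton_iff) simp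
      then show False using assms(1) by simp
    qed
    show "separable n S X"
      unfolding separable_def non_separable_def
    proof
      assume "\<exists>mu v. prob_dist mu \<and> (\<exists>w\<in>supp mu. X w \<noteq> v) \<and>
        (\<forall>i<n. \<forall>w\<in>supp mu. cond_exp mu X (cell (S i) w) = v)"
      then obtain mu v w where pd: "prob_dist mu" and w: "w \<in> supp mu" "X w \<noteq> v"
        and ce: "\<forall>i<n. \<forall>w\<in>supp mu. cond_exp mu X (cell (S i) w) = v" by blast
      have nn: "\<forall>w. 0 \<le> mu w" using pd unfolding prob_dist_def by blast
      obtain w0 where "{w. X w < v} \<subseteq> {w0} \<or> {w. X w > v} \<subseteq> {w0}" using rhs_cond[OF R] by blast
      then show False
      proof
        assume "{w. X w < v} \<subseteq> {w0}"
        then show False using core[OF info n nn ce w] by blast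
      next
        assume H: "{w. X w > v} \<subseteq> {w0}"
        have ce': "\<forall>i<n. \<forall>w\<in>supp mu. cond_exp mu (\<lambda>x. - X x) (cell (S i) w) = - v"
          using ce by (simp add: cond_exp_neg)
        have H': "{w. - X w < - v} \<subseteq> {w0}" using H by simp
        have "- X w \<noteq> - v" using w(2) by simp
        then show False using core[OF info n nn ce' w(1) _ H'] by blast
      qed
    qed
  qed
qed

end
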